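(* (1) If $t_1 : X_1 \to X'_1$ with proof label $\theta_1$ and $t_2 : X_2\to X'_2$ with proof label $\theta_2$ are connected CCSK$^{\mathrm P}$ transitions (each forward or backward), then $\theta_1\frown\theta_2$. (2) If $\theta_1\frown\theta_2$, then there exist CCSK$^{\mathrm P}$ transitions $t_1: X_1\to X'_1$ with proof label $\theta_1$ and $t_2: X_2\to X'_2$ with proof label $\theta_2$ (each forward or backward) such that $t_1$ and $t_2$ are connected.
   Context: Names $\mathsf N$ with a bijection $\overline{\cdot}$ onto disjoint co-names $\overline{\mathsf N}$; labels $\mathsf L=\mathsf N\cup\overline{\mathsf N}\cup\{\tau\}$ ($\alpha$ ranges over $\mathsf L$, $\lambda$ over $\mathsf L\setminus\{\tau\}$, $\overline\tau=\tau$); $\mathsf K$ a denumerable set of keys. CCSK processes: $X,Y::=\mathbf 0\mid\alpha.X\mid X\backslash\lambda\mid X+Y\mid X|Y\mid\alpha[k].X$; $\mathrm{keys}(X)$ is the set of keys occurring in $X$; $X$ is standard if $\mathrm{keys}(X)=\emptyset$. Directions $D\in\{\mathrm L,\mathrm R\}$, $\bar{\mathrm L}=\mathrm R$, $\bar{\mathrm R}=\mathrm L$. Proof keyed labels: $\theta::=\upsilon\,\alpha[k]\mid\upsilon\langle\upsilon_1\lambda[k],\upsilon_2\overline\lambda[k]\rangle$ with $\upsilon,\upsilon_1,\upsilon_2\in\{|_{\mathrm L},|_{\mathrm R},+_{\mathrm L},+_{\mathrm R}\}^*$; $\ell(\upsilon\alpha[k])=\alpha$, $\ell(\upsilon\langle\cdots\rangle)=\tau$,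 $\mathrm{key}(\theta)=k$. Forward transitions $X\xrightarrow{\theta}X'$ of CCSK$^{\mathrm P}$ form the least relation closed under: (act) $\alpha.X\xrightarrow{\alpha[k]}\alpha[k].X$ for any $k$, if $\mathrm{keys}(X)=\emptyset$; (pre) if $X\xrightarrow\theta X'$ and $\mathrm{key}(\theta)\ne k$ then $\alpha[k].X\xrightarrow\theta\alpha[k].X'$; (res) if $X\xrightarrow\theta X'$ and $\ell(\theta)\notin\{\lambda,\overline\lambda\}$ then $X\backslash\lambda\xrightarrow\theta X'\backslash\lambda$; (par) if $X\xrightarrow\theta X'$ and $\mathrm{key}(\theta)\notin\mathrm{keys}(Y)$ then $X|Y\xrightarrow{|_{\mathrm L}\theta}X'|Y$ and $Y|X\xrightarrow{|_{\mathrm R}\theta}Y|X'$; (syn) if $X\xrightarrow{\upsilon_1\lambda[k]}X'$ and $Y\xrightarrow{\upsilon_2\overline\lambda[k]}Y'$ then $X|Y\xrightarrow{\langle\upsilon_1\lambda[k],\upsilon_2\overline\lambda[k]\rangle}X'|Y'$; (sum) if $X\xrightarrow\theta X'$ and $\mathrm{keys}(Y)=\emptyset$ then $X+Y\xrightarrow{+_{\mathrm L}\theta}X'+Y$ and $Y+X\xrightarrow{+_{\mathrm R}\theta}Y+X'$. Backward transitions are the converse: a backward transition from $Y$ to $X$ with label $\theta$ exists iff $X\xrightarrow\theta Y$. A transition has a source, target and proof label; a path is a finite sequence of (forward or backward) transitions each of whose target is the source of the next. A process is reachable if there is a path from a standard process to it; only reachable processes are considered. Transitions $t_1,t_2$ are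 connected if there is a path from the source of one to the target of the other. Connectivity $\frown$ on proof keyed labels is the least relation closed under (a label "is a prefix" if it has the form $\beta[k']$; $\theta_{\mathrm L},\theta_{\mathrm R}$ are the components of a synchronisation label): (A1) $\alpha[k]\frown\theta$; (A2) $\theta\frown\alpha[k]$ if $\theta$ is not a prefix; (P1) $|_D\theta\frown|_D\theta'$ if $\theta\frown\theta'$; (P2) $|_D\theta\frown|_{\bar D}\theta'$; (C1) $+_D\theta\frown+_D\theta'$ if $\theta\frown\theta'$; (C2) $+_D\theta\frown+_{\bar D}\theta'$; (S1) $|_D\theta\frown\langle\theta_{\mathrm L},\theta_{\mathrm R}\rangle$ if $\theta\frown\theta_D$; (S2) $\langle\theta_{\mathrm L},\theta_{\mathrm R}\rangle\frown|_D\theta$ if $\theta_D\frown\theta$; (S3) $\langle\theta_1,\theta_2\rangle\frown\langle\theta'_1,\theta'_2\rangle$ if $\theta_1\frown\theta'_1$ and $\theta_2\frown\theta'_2$. *)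

theory Defs
  imports Main
begin

text \<open>Names are a type parameter 'n; co-names are a disjoint copy. Keys are nat (denumerable).\<close>

datatype 'n act = Nm 'n | CoNm 'n
datatype 'n lab = Vis "'n act" | Tau

type_synonym key = nat

fun coact :: "'n act \<Rightarrow> 'n act" where
  "coact (Nm a) = CoNm a"
| "coact (CoNm a) = Nm a"

datatype 'n proc =
    Zero
  | Pre "'n lab" "'n proc"
  | Res "'n proc" "'n act"
  | Sum "'n proc" "'n proc"
  | Par "'n proc" "'n proc"
  | KPre "'n lab" key "'n proc"

fun keys :: "'n proc \<Rightarrow> key set" where
  "keys Zero = {}"
| "keys (Pre a X) = keys X"
| "keys (Res X l) = keys X"
| "keys (Sum X Y) = keys X \<union> keys Y"
| "keys (Par X Y) = keys X \<union> keys Y"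
| "keys (KPre a k X) = insert k (keys X)"

definition standard :: "'n proc \<Rightarrow> bool" where
  "standard X \<longleftrightarrow> keys X = {}"

datatype dir = DL | DR

fun flip :: "dir \<Rightarrow> dir" where
  "flip DL = DR" | "flip DR = DL"

datatype op = ParOp dir | SumOp dir

text \<open>Proof keyed labels, following the grammar exactly:
  PAct \<upsilon> \<alpha> k  is  \<upsilon>\<alpha>[k];
  PSyn \<upsilon> \<upsilon>1 \<lambda> \<upsilon>2 k  is  \<upsilon>\<langle>\<upsilon>1\<lambda>[k], \<upsilon>2 co(\<lambda>)[k]\<rangle>.\<close>
datatype 'n pkl =
    PAct "op list" "'n lab" key
  | PSyn "op list" "op list" "'n act" "op list" key

fun pre :: "op \<Rightarrow> 'n pkl \<Rightarrow> 'n pkl" where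
  "pre o' (PAct u a k) = PAct (o' # u) a k"
| "pre o' (PSyn u u1 l u2 k) = PSyn (o' # u) u1 l u2 k"

fun lbl :: "'n pkl \<Rightarrow> 'n lab" where
  "lbl (PAct u a k) = a"
| "lbl (PSyn u u1 l u2 k) = Tau"

fun pkey :: "'n pkl \<Rightarrow> key" where
  "pkey (PAct u a k) = k"
| "pkey (PSyn u u1 l u2 k) = k"

fun is_prefix :: "'n pkl \<Rightarrow> bool" where
  "is_prefix (PAct u a k) = (u = [])"
| "is_prefix (PSyn u u1 l u2 k) = False"

text \<open>Components of a (top-level) synchronisation label \<langle>\<theta>_L, \<theta>_R\<rangle>.\<close>
fun comp :: "dir \<Rightarrow> op list \<Rightarrow> 'n act \<Rightarrow> op list \<Rightarrow> key \<Rightarrow> 'n pkl" where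
  "comp DL u1 l u2 k = PAct u1 (Vis l) k"
| "comp DR u1 l u2 k = PAct u2 (Vis (coact l)) k"

inductive fwd :: "'n proc \<Rightarrow> 'n pkl \<Rightarrow> 'n proc \<Rightarrow> bool" where
  act: "keys X = {} \<Longrightarrow> fwd (Pre a X) (PAct [] a k) (KPre a k X)"
| pre: "fwd X th X' \<Longrightarrow> pkey th \<noteq> k \<Longrightarrow> fwd (KPre a k X) th (KPre a k X')"
| res: "fwd X th X' \<Longrightarrow> lbl th \<notin> {Vis l, Vis (coact l)} \<Longrightarrow> fwd (Res X l) th (Res X' l)"
| parL: "fwd X th X' \<Longrightarrow> pkey th \<notin> keys Y \<Longrightarrow> fwd (Par X Y) (pre (ParOp DL) th) (Par X' Y)"
| parR: "fwd X th X' \<Longrightarrow> pkey th \<notin> keys Y \<Longrightarrow> fwd (Par Y X) (pre (ParOp DR) th) (Par Y X')"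
| syn: "fwd X (PAct u1 (Vis l) k) X' \<Longrightarrow> fwd Y (PAct u2 (Vis (coact l)) k) Y' \<Longrightarrow>
        fwd (Par X Y) (PSyn [] u1 l u2 k) (Par X' Y')"
| sumL: "fwd X th X' \<Longrightarrow> keys Y = {} \<Longrightarrow> fwd (Sum X Y) (pre (SumOp DL) th) (Sum X' Y)"
| sumR: "fwd X th X' \<Longrightarrow> keys Y = {} \<Longrightarrow> fwd (Sum Y X) (pre (SumOp DR) th) (Sum Y X')"

definition ptrans :: "'n proc \<Rightarrow> 'n pkl \<Rightarrow> 'n proc \<Rightarrow> bool" where
  "ptrans X th Y \<longleftrightarrow> fwd X th Y \<or> fwd Y th X"

definition path :: "'n proc \<Rightarrow> 'n proc \<Rightarrow> bool" where
  "path X Y \<longleftrightarrow> (\<lambda>A B. \<exists>th. ptrans A th B)\<^sup>*\<^sup>* X Y"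

definition reachable :: "'n proc \<Rightarrow> bool" where
  "reachable X \<longleftrightarrow> (\<exists>S. standard S \<and> path S X)"

definition connected :: "'n proc \<Rightarrow> 'n proc \<Rightarrow> 'n proc \<Rightarrow> 'n proc \<Rightarrow> bool" where
  "connected X1 X1' X2 X2' \<longleftrightarrow> path X1 X2' \<or> path X2 X1'"

inductive conn :: "'n pkl \<Rightarrow> 'n pkl \<Rightarrow> bool" where
  A1: "conn (PAct [] a k) th"
| A2: "\<not> is_prefix th \<Longrightarrow> conn th (PAct [] a k)"
| P1: "conn th th' \<Longrightarrow> conn (pre (ParOp D) th) (pre (ParOp D) th')"
| P2: "conn (pre (ParOp D) th) (pre (ParOp (flip D)) th')"
| C1: "conn th th' \<Longrightarrow> conn (pre (SumOp D) th) (pre (SumOp D) th')"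
| C2: "conn (pre (SumOp D) th) (pre (SumOp (flip D)) th')"
| S1: "conn th (comp D u1 l u2 k) \<Longrightarrow> conn (pre (ParOp D) th) (PSyn [] u1 l u2 k)"
| S2: "conn (comp D u1 l u2 k) th \<Longrightarrow> conn (PSyn [] u1 l u2 k) (pre (ParOp D) th)"
| S3: "conn (PAct u1 (Vis l) k) (PAct u1' (Vis l') k') \<Longrightarrow>
       conn (PAct u2 (Vis (coact l)) k) (PAct u2' (Vis (coact l')) k') \<Longrightarrow>
       conn (PSyn [] u1 l u2 k) (PSyn [] u1' l' u2' k')"

end

theory Submission
  imports Defs
begin


fun skel :: "'n proc \<Rightarrow> 'n proc" where
  "skel Zero = Zero"
| "skel (Pre a X) = Pre a (skel X)"
| "skel (Res X l) = Res (skel X) l"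
| "skel (Sum X Y) = Sum (skel X) (skel Y)"
| "skel (Par X Y) = Par (skel X) (skel Y)"
| "skel (KPre a k X) = Pre a (skel X)"

lemma fwd_skel: "fwd X th Y \<Longrightarrow> skel X = skel Y"
  by (induction rule: fwd.induct) auto

lemma ptrans_skel: "ptrans X th Y \<Longrightarrow> skel X = skel Y"
  unfolding ptrans_def using fwd_skel by metis

lemma path_skel: "path X Y \<Longrightarrow> skel X = skel Y"
  unfolding path_def
  by (induction rule: rtranclp_induct) (auto dest: ptrans_skel)

definition can :: "'n proc \<Rightarrow> 'n pkl \<Rightarrow> bool" where
  "can X th \<longleftrightarrow> (\<exists>Y. ptrans X th Y)"

lemma can_Zero: "\<not> can Zero th"
  by (auto simp: can_def ptrans_def elim: fwd.cases)

lemma can_Pre: "can (Pre a A) th \<Longrightarrow> \<exists>k. th = PAct [] a k"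
  by (auto simp: can_def ptrans_def elim: fwd.cases)

lemma can_KPre: "can (KPre a k A) th \<Longrightarrow> can A th \<or> th = PAct [] a k"
  by (auto simp: can_def ptrans_def elim: fwd.cases)

lemma can_Res: "can (Res A l) th \<Longrightarrow> can A th"
  by (auto simp: can_def ptrans_def elim: fwd.cases)

lemma can_Sum: "can (Sum A B) th \<Longrightarrow>
   (\<exists>t. th = pre (SumOp DL) t \<and> can A t) \<or> (\<exists>t. th = pre (SumOp DR) t \<and> can B t)"
  unfolding can_def ptrans_def
  by (erule exE, erule disjE; erule fwd.cases; blast)

lemma can_Par: "can (Par A B) th \<Longrightarrow>
   (\<exists>t. th = pre (ParOp DL) t \<and> can A t) \<or> (\<exists>t. th = pre (ParOp DR) t \<and> can B t)
   \<or> (\<exists>u1 l u2 k. th = PSyn [] u1 l u2 k \<and> can A (PAct u1 (Vis l) k) \<and> can B (PAct u2 (Vis (coact l)) k))"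
  unfolding can_def ptrans_def
  by (erule exE, erule disjE; erule fwd.cases; blast)

lemma conn_prefix2: "conn th (PAct [] a k)"
proof (cases "is_prefix th")
  case True
  then obtain b k' where "th = PAct [] b k'" by (cases th) auto
  then show ?thesis by (simp add: conn.A1)
next
  case False
  then show ?thesis by (rule conn.A2)
qed

lemma main1: "skel X1 = skel X2 \<Longrightarrow> can X1 th1 \<Longrightarrow> can X2 th2 \<Longrightarrow> conn th1 th2"
proof (induction X1 arbitrary: X2 th1 th2)
  case Zero
  then show ?case using can_Zero by blast
next
  case (Pre a A)
  then obtain k where "th1 = PAct [] a k" using can_Pre by blast
  then show ?case by (simp add: conn.A1)
next
  case (Res A l)
  then obtain A' where X2: "X2 = Res A' l" "skel A = skel A'" by (cases X2) auto
  then show ?case using Res can_Res by blast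
next
  case (KPre a k A)
  then obtain A' where A': "skel A = skel A'" "X2 = Pre a A' \<or> (\<exists>k'. X2 = KPre a k' A')"
    by (cases X2) auto
  show ?case
  proof (cases "th1 = PAct [] a k")
    case True then show ?thesis by (simp add: conn.A1)
  next
    case False
    then have c1: "can A th1" using KPre can_KPre by blast
    from A'(2) show ?thesis
    proof
      assume "X2 = Pre a A'"
      then show ?thesis using KPre can_Pre conn_prefix2 by metis
    next
      assume "\<exists>k'. X2 = KPre a k' A'"
      then obtain k' where "X2 = KPre a k' A'" by blast
      then have "can A' th2 \<or> th2 = PAct [] a k'" using KPre can_KPre by blast
      then show ?thesis using KPre.IH[OF A'(1) c1] conn_prefix2 by blast
    qed
  qed
next
  case (Sum A B)
  then obtain A' B' where X2: "X2 = Sum A' B'" "skel A = skel A'" "skel B = skel B'"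
    by (cases X2) auto
  from can_Sum[OF Sum.prems(2)] can_Sum[OF Sum.prems(3)[unfolded X2(1)]] show ?case
    using Sum.IH X2 conn.C1 conn.C2[of DL] conn.C2[of DR] by fastforce
next
  case (Par A B)
  then obtain A' B' where X2: "X2 = Par A' B'" "skel A = skel A'" "skel B = skel B'"
    by (cases X2) auto
  from can_Par[OF Par.prems(2)] can_Par[OF Par.prems(3)[unfolded X2(1)]] show ?case
  proof (elim disjE exE conjE)
  qed (use Par.IH X2 in \<open>auto intro: conn.P1 conn.P2[of DL, simplified] conn.P2[of DR, simplified]
        conn.S1[of _ DL, simplified] conn.S1[of _ DR, simplified]
        conn.S2[of DL, simplified] conn.S2[of DR, simplified] conn.S3\<close>)
qed



fun ctx :: "op list \<Rightarrow> 'n proc \<Rightarrow> 'n proc" where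
  "ctx [] P = P"
| "ctx (ParOp DL # u) P = Par (ctx u P) Zero"
| "ctx (ParOp DR # u) P = Par Zero (ctx u P)"
| "ctx (SumOp DL # u) P = Sum (ctx u P) Zero"
| "ctx (SumOp DR # u) P = Sum Zero (ctx u P)"

lemma pkey_pre[simp]: "pkey (pre o' th) = pkey th"
  by (cases th) auto

lemma keys_ctx[simp]: "keys (ctx u P) = keys P"
  by (induction u P rule: ctx.induct) auto

lemma fwd_ctx: "fwd P th P' \<Longrightarrow> fwd (ctx u P) (foldr pre u th) (ctx u P')"
  by (induction u P rule: ctx.induct) (auto intro: fwd.intros)

lemma foldr_PAct: "foldr pre u (PAct v a k) = PAct (u @ v) a k"
  by (induction u) auto

lemma foldr_PSyn: "foldr pre u (PSyn v u1 l u2 k) = PSyn (u @ v) u1 l u2 k"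
  by (induction u) auto

lemma canon_act: "fwd (ctx u (Pre a Zero)) (PAct u a k) (ctx u (KPre a k Zero))"
  using fwd_ctx[OF fwd.act[of Zero a k], of u] by (simp add: foldr_PAct)

lemma canon: "\<exists>P P'. keys P = {} \<and> fwd P th P'"
proof (cases th)
  case (PAct u a k)
  have "keys (ctx u (Pre a Zero)) = {}" by simp
  then show ?thesis using canon_act PAct by blast
next
  case (PSyn u u1 l u2 k)
  have "fwd (Par (ctx u1 (Pre (Vis l) Zero)) (ctx u2 (Pre (Vis (coact l)) Zero))) (PSyn [] u1 l u2 k)
          (Par (ctx u1 (KPre (Vis l) k Zero)) (ctx u2 (KPre (Vis (coact l)) k Zero)))"
    by (rule fwd.syn; rule canon_act)
  from fwd_ctx[OF this, of u] have "fwd (ctx u (Par (ctx u1 (Pre (Vis l) Zero)) (ctx u2 (Pre (Vis (coact l)) Zero)))) th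
     (ctx u (Par (ctx u1 (KPre (Vis l) k Zero)) (ctx u2 (KPre (Vis (coact l)) k Zero))))"
    using PSyn by (simp add: foldr_PSyn)
  moreover have "keys (ctx u (Par (ctx u1 (Pre (Vis l) Zero)) (ctx u2 (Pre (Vis (coact l)) Zero)))) = {}" by simp
  ultimately show ?thesis by blast
qed

lemma fwd_keys: "fwd X th Y \<Longrightarrow> keys Y = insert (pkey th) (keys X)"
  by (induction rule: fwd.induct) auto

inductive fpath :: "key set \<Rightarrow> 'n proc \<Rightarrow> 'n proc \<Rightarrow> bool" for K where
  refl: "fpath K X X"
| step: "fpath K X Y \<Longrightarrow> fwd Y th Z \<Longrightarrow> pkey th \<in> K \<Longrightarrow> fpath K X Z"

lemma fpath_keys: "fpath K X Y \<Longrightarrow> keys Y \<subseteq> K \<union> keys X"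
  by (induction rule: fpath.induct) (auto simp: fwd_keys)

lemma fpath_mono: "fpath K X Y \<Longrightarrow> K \<subseteq> K' \<Longrightarrow> fpath K' X Y"
  by (induction rule: fpath.induct) (auto intro: fpath.intros)

lemma fpath_trans: "fpath K Y Z \<Longrightarrow> fpath K X Y \<Longrightarrow> fpath K X Z"
  by (induction rule: fpath.induct) (auto intro: fpath.intros)

lemma fpath_ParL: "fpath K X Y \<Longrightarrow> K \<inter> keys Z = {} \<Longrightarrow> fpath K (Par X Z) (Par Y Z)"
proof (induction rule: fpath.induct)
  case (step X Y th W)
  then have "fwd (Par Y Z) (pre (ParOp DL) th) (Par W Z)" by (intro fwd.parL) auto
  with step show ?case by (auto intro: fpath.step)
qed (rule fpath.refl)

lemma fpath_ParR: "fpath K X Y \<Longrightarrow> K \<inter> keys Z = {} \<Longrightarrow> fpath K (Par Z X) (Par Z Y)"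
proof (induction rule: fpath.induct)
  case (step X Y th W)
  then have "fwd (Par Z Y) (pre (ParOp DR) th) (Par Z W)" by (intro fwd.parR) auto
  with step show ?case by (auto intro: fpath.step)
qed (rule fpath.refl)

lemma fpath_SumL: "fpath K X Y \<Longrightarrow> keys Z = {} \<Longrightarrow> fpath K (Sum X Z) (Sum Y Z)"
proof (induction rule: fpath.induct)
  case (step X Y th W)
  then have "fwd (Sum Y Z) (pre (SumOp DL) th) (Sum W Z)" by (intro fwd.sumL) auto
  with step show ?case by (auto intro: fpath.step)
qed (rule fpath.refl)

lemma fpath_SumR: "fpath K X Y \<Longrightarrow> keys Z = {} \<Longrightarrow> fpath K (Sum Z X) (Sum Z Y)"
proof (induction rule: fpath.induct)
  case (step X Y th W)
  then have "fwd (Sum Z Y) (pre (SumOp DR) th) (Sum Z W)" by (intro fwd.sumR) auto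
  with step show ?case by (auto intro: fpath.step)
qed (rule fpath.refl)

definition wit :: "key set \<Rightarrow> 'n pkl \<Rightarrow> 'n pkl \<Rightarrow> bool" where
  "wit F th1 th2 \<longleftrightarrow> (\<exists>S X1 X1' X2 X2' K. keys S = {} \<and> K \<inter> F = {} \<and> finite K \<and>
     fpath K S X1 \<and> fwd X1 th1 X1' \<and> fpath K S X2 \<and> fwd X2 th2 X2')"

lemma wit_prefix:
  assumes "finite F"
  shows "wit F (PAct [] a k) th \<and> wit F th (PAct [] a k)"
proof -
  obtain P P' where P: "keys P = {}" "fwd P th P'" using canon by blast
  obtain k2 where k2: "k2 \<notin> F \<union> {k, pkey th}"
    using ex_new_if_finite[of "F \<union> {k, pkey th}"] assms by auto
  have s1: "fwd (Pre a P) (PAct [] a k) (KPre a k P)" using P by (intro fwd.act)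
  have f2: "fpath {k2} (Pre a P) (KPre a k2 P)"
    using fpath.step[OF fpath.refl fwd.act[OF P(1)]] by auto
  have s2: "fwd (KPre a k2 P) th (KPre a k2 P')" using P k2 by (intro fwd.pre) auto
  have "{k2} \<inter> F = {}" using k2 by auto
  then have "wit F (PAct [] a k) th" unfolding wit_def using P(1) s1 s2 f2
    by (intro exI[of _ "Pre a P"] exI[of _ "Pre a P"] exI[of _ "KPre a k P"]
      exI[of _ "KPre a k2 P"] exI[of _ "KPre a k2 P'"] exI[of _ "{k2}"]) (simp add: fpath.refl)
  moreover have "wit F th (PAct [] a k)" unfolding wit_def using P(1) s1 s2 f2 \<open>{k2} \<inter> F = {}\<close>
    by (intro exI[of _ "Pre a P"] exI[of _ "KPre a k2 P"] exI[of _ "KPre a k2 P'"]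
      exI[of _ "Pre a P"] exI[of _ "KPre a k P"] exI[of _ "{k2}"]) (simp add: fpath.refl)
  ultimately show ?thesis by blast
qed

lemma wit_intro: "keys S = {} \<Longrightarrow> K \<inter> F = {} \<Longrightarrow> finite K \<Longrightarrow> fpath K S X1 \<Longrightarrow>
  fwd X1 th1 X1' \<Longrightarrow> fpath K S X2 \<Longrightarrow> fwd X2 th2 X2' \<Longrightarrow> wit F th1 th2"
  unfolding wit_def by blast

lemma wit_elim: "wit F th1 th2 \<Longrightarrow> (\<And>S X1 X1' X2 X2' K. keys S = {} \<Longrightarrow> K \<inter> F = {} \<Longrightarrow> finite K \<Longrightarrow>
  fpath K S X1 \<Longrightarrow> fwd X1 th1 X1' \<Longrightarrow> fpath K S X2 \<Longrightarrow> fwd X2 th2 X2' \<Longrightarrow> P) \<Longrightarrow> P"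
  unfolding wit_def by blast

lemma wit_conn: "conn th1 th2 \<Longrightarrow> \<forall>F. finite F \<longrightarrow> wit F th1 th2"
proof (induction rule: conn.induct)
  case (A1 a k th)
  then show ?case using wit_prefix by blast
next
  case (A2 th a k)
  then show ?case using wit_prefix by blast
next
  case (P1 th th' D)
  show ?case
  proof (intro allI impI)
    fix F :: "key set" assume "finite F"
    with P1.IH have h: "wit F th th'" by blast
    then obtain S X1 X1' X2 X2' K where w: "keys S = {}" "K \<inter> F = {}" "finite K"
     "fpath K S X1" "fwd X1 th X1'" "fpath K S X2" "fwd X2 th' X2'"
      by (rule wit_elim)
    show "wit F (pre (ParOp D) th) (pre (ParOp D) th')"
    proof (cases D)
      case DL
      have a: "fpath K (Par S Zero) (Par X1 Zero)" by (rule fpath_ParL[OF w(4)]) simp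
      have b: "fpath K (Par S Zero) (Par X2 Zero)" by (rule fpath_ParL[OF w(6)]) simp
      have c: "fwd (Par X1 Zero) (pre (ParOp DL) th) (Par X1' Zero)" by (rule fwd.parL[OF w(5)]) simp
      have d: "fwd (Par X2 Zero) (pre (ParOp DL) th') (Par X2' Zero)" by (rule fwd.parL[OF w(7)]) simp
      show ?thesis unfolding DL by (rule wit_intro[OF _ w(2,3) a c b d]) (simp add: w(1))
    next
      case DR
      have a: "fpath K (Par Zero S) (Par Zero X1)" by (rule fpath_ParR[OF w(4)]) simp
      have b: "fpath K (Par Zero S) (Par Zero X2)" by (rule fpath_ParR[OF w(6)]) simp
      have c: "fwd (Par Zero X1) (pre (ParOp DR) th) (Par Zero X1')" by (rule fwd.parR[OF w(5)]) simp
      have d: "fwd (Par Zero X2) (pre (ParOp DR) th') (Par Zero X2')" by (rule fwd.parR[OF w(7)]) simp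
      show ?thesis unfolding DR by (rule wit_intro[OF _ w(2,3) a c b d]) (simp add: w(1))
    qed
  qed
next
  case (P2 D th th')
  obtain P P' where P: "keys P = {}" "fwd P th P'" using canon by blast
  obtain Q Q' where Q: "keys Q = {}" "fwd Q th' Q'" using canon by blast
  show ?case
  proof (intro allI impI)
    fix F :: "key set"
    show "wit F (pre (ParOp D) th) (pre (ParOp (flip D)) th')"
    proof (cases D)
      case DL
      have c: "fwd (Par P Q) (pre (ParOp DL) th) (Par P' Q)" by (rule fwd.parL[OF P(2)]) (simp add: Q)
      have d: "fwd (Par P Q) (pre (ParOp DR) th') (Par P Q')" by (rule fwd.parR[OF Q(2)]) (simp add: P)
      show ?thesis unfolding DL flip.simps
        by (rule wit_intro[where K="{}", OF _ _ _ fpath.refl c fpath.refl d]) (simp_all add: P Q)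
    next
      case DR
      have c: "fwd (Par Q P) (pre (ParOp DR) th) (Par Q P')" by (rule fwd.parR[OF P(2)]) (simp add: Q)
      have d: "fwd (Par Q P) (pre (ParOp DL) th') (Par Q' P)" by (rule fwd.parL[OF Q(2)]) (simp add: P)
      show ?thesis unfolding DR flip.simps
        by (rule wit_intro[where K="{}", OF _ _ _ fpath.refl c fpath.refl d]) (simp_all add: P Q)
    qed
  qed
next
  case (C1 th th' D)
  show ?case
  proof (intro allI impI)
    fix F :: "key set" assume "finite F"
    with C1.IH have h: "wit F th th'" by blast
    then obtain S X1 X1' X2 X2' K where w: "keys S = {}" "K \<inter> F = {}" "finite K"
     "fpath K S X1" "fwd X1 th X1'" "fpath K S X2" "fwd X2 th' X2'"
      by (rule wit_elim)
    show "wit F (pre (SumOp D) th) (pre (SumOp D) th')"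
    proof (cases D)
      case DL
      have a: "fpath K (Sum S Zero) (Sum X1 Zero)" by (rule fpath_SumL[OF w(4)]) simp
      have b: "fpath K (Sum S Zero) (Sum X2 Zero)" by (rule fpath_SumL[OF w(6)]) simp
      have c: "fwd (Sum X1 Zero) (pre (SumOp DL) th) (Sum X1' Zero)" by (rule fwd.sumL[OF w(5)]) simp
      have d: "fwd (Sum X2 Zero) (pre (SumOp DL) th') (Sum X2' Zero)" by (rule fwd.sumL[OF w(7)]) simp
      show ?thesis unfolding DL by (rule wit_intro[OF _ w(2,3) a c b d]) (simp add: w(1))
    next
      case DR
      have a: "fpath K (Sum Zero S) (Sum Zero X1)" by (rule fpath_SumR[OF w(4)]) simp
      have b: "fpath K (Sum Zero S) (Sum Zero X2)" by (rule fpath_SumR[OF w(6)]) simp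
      have c: "fwd (Sum Zero X1) (pre (SumOp DR) th) (Sum Zero X1')" by (rule fwd.sumR[OF w(5)]) simp
      have d: "fwd (Sum Zero X2) (pre (SumOp DR) th') (Sum Zero X2')" by (rule fwd.sumR[OF w(7)]) simp
      show ?thesis unfolding DR by (rule wit_intro[OF _ w(2,3) a c b d]) (simp add: w(1))
    qed
  qed
next
  case (C2 D th th')
  obtain P P' where P: "keys P = {}" "fwd P th P'" using canon by blast
  obtain Q Q' where Q: "keys Q = {}" "fwd Q th' Q'" using canon by blast
  show ?case
  proof (intro allI impI)
    fix F :: "key set"
    show "wit F (pre (SumOp D) th) (pre (SumOp (flip D)) th')"
    proof (cases D)
      case DL
      have c: "fwd (Sum P Q) (pre (SumOp DL) th) (Sum P' Q)" by (rule fwd.sumL[OF P(2)]) (simp add: Q)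
      have d: "fwd (Sum P Q) (pre (SumOp DR) th') (Sum P Q')" by (rule fwd.sumR[OF Q(2)]) (simp add: P)
      show ?thesis unfolding DL flip.simps
        by (rule wit_intro[where K="{}", OF _ _ _ fpath.refl c fpath.refl d]) (simp_all add: P Q)
    next
      case DR
      have c: "fwd (Sum Q P) (pre (SumOp DR) th) (Sum Q P')" by (rule fwd.sumR[OF P(2)]) (simp add: Q)
      have d: "fwd (Sum Q P) (pre (SumOp DL) th') (Sum Q' P)" by (rule fwd.sumL[OF Q(2)]) (simp add: P)
      show ?thesis unfolding DR flip.simps
        by (rule wit_intro[where K="{}", OF _ _ _ fpath.refl c fpath.refl d]) (simp_all add: P Q)
    qed
  qed
next
  case (S1 th D u1 l u2 k)
  show ?case
  proof (intro allI impI)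
    fix F :: "key set" assume "finite F"
    with S1.IH have h: "wit F th (comp D u1 l u2 k)" by blast
    then obtain S X1 X1' X2 X2' K where w: "keys S = {}" "K \<inter> F = {}" "finite K"
     "fpath K S X1" "fwd X1 th X1'" "fpath K S X2" "fwd X2 (comp D u1 l u2 k) X2'"
      by (rule wit_elim)
    show "wit F (pre (ParOp D) th) (PSyn [] u1 l u2 k)"
    proof (cases D)
      case DL
      let ?R = "ctx u2 (Pre (Vis (coact l)) Zero)"
      let ?R' = "ctx u2 (KPre (Vis (coact l)) k Zero)"
      have d: "fwd (Par X2 ?R) (PSyn [] u1 l u2 k) (Par X2' ?R')"
        using w(7) DL by (intro fwd.syn canon_act) simp
      have a: "fpath K (Par S ?R) (Par X1 ?R)" by (rule fpath_ParL[OF w(4)]) simp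
      have b: "fpath K (Par S ?R) (Par X2 ?R)" by (rule fpath_ParL[OF w(6)]) simp
      have c: "fwd (Par X1 ?R) (pre (ParOp DL) th) (Par X1' ?R)" by (rule fwd.parL[OF w(5)]) simp
      show ?thesis unfolding DL by (rule wit_intro[OF _ w(2,3) a c b d]) (simp add: w(1))
    next
      case DR
      let ?R = "ctx u1 (Pre (Vis l) Zero)"
      let ?R' = "ctx u1 (KPre (Vis l) k Zero)"
      have d: "fwd (Par ?R X2) (PSyn [] u1 l u2 k) (Par ?R' X2')"
        using w(7) DR by (intro fwd.syn canon_act) simp
      have a: "fpath K (Par ?R S) (Par ?R X1)" by (rule fpath_ParR[OF w(4)]) simp
      have b: "fpath K (Par ?R S) (Par ?R X2)" by (rule fpath_ParR[OF w(6)]) simp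
      have c: "fwd (Par ?R X1) (pre (ParOp DR) th) (Par ?R X1')" by (rule fwd.parR[OF w(5)]) simp
      show ?thesis unfolding DR by (rule wit_intro[OF _ w(2,3) a c b d]) (simp add: w(1))
    qed
  qed
next
  case (S2 D u1 l u2 k th)
  show ?case
  proof (intro allI impI)
    fix F :: "key set" assume "finite F"
    with S2.IH have h: "wit F (comp D u1 l u2 k) th" by blast
    then obtain S X1 X1' X2 X2' K where w: "keys S = {}" "K \<inter> F = {}" "finite K"
     "fpath K S X1" "fwd X1 (comp D u1 l u2 k) X1'" "fpath K S X2" "fwd X2 th X2'"
      by (rule wit_elim)
    show "wit F (PSyn [] u1 l u2 k) (pre (ParOp D) th)"
    proof (cases D)
      case DL
      let ?R = "ctx u2 (Pre (Vis (coact l)) Zero)"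
      let ?R' = "ctx u2 (KPre (Vis (coact l)) k Zero)"
      have c: "fwd (Par X1 ?R) (PSyn [] u1 l u2 k) (Par X1' ?R')"
        using w(5) DL by (intro fwd.syn canon_act) simp
      have a: "fpath K (Par S ?R) (Par X1 ?R)" by (rule fpath_ParL[OF w(4)]) simp
      have b: "fpath K (Par S ?R) (Par X2 ?R)" by (rule fpath_ParL[OF w(6)]) simp
      have d: "fwd (Par X2 ?R) (pre (ParOp DL) th) (Par X2' ?R)" by (rule fwd.parL[OF w(7)]) simp
      show ?thesis unfolding DL by (rule wit_intro[OF _ w(2,3) a c b d]) (simp add: w(1))
    next
      case DR
      let ?R = "ctx u1 (Pre (Vis l) Zero)"
      let ?R' = "ctx u1 (KPre (Vis l) k Zero)"
      have c: "fwd (Par ?R X1) (PSyn [] u1 l u2 k) (Par ?R' X1')"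
        using w(5) DR by (intro fwd.syn canon_act) simp
      have a: "fpath K (Par ?R S) (Par ?R X1)" by (rule fpath_ParR[OF w(4)]) simp
      have b: "fpath K (Par ?R S) (Par ?R X2)" by (rule fpath_ParR[OF w(6)]) simp
      have d: "fwd (Par ?R X2) (pre (ParOp DR) th) (Par ?R X2')" by (rule fwd.parR[OF w(7)]) simp
      show ?thesis unfolding DR by (rule wit_intro[OF _ w(2,3) a c b d]) (simp add: w(1))
    qed
  qed
next
  case (S3 u1 l k u1' l' k' u2 u2')
  show ?case
  proof (intro allI impI)
    fix F :: "key set" assume F: "finite F"
    with S3.IH(1) have h: "wit F (PAct u1 (Vis l) k) (PAct u1' (Vis l') k')" by blast
    then obtain S X1 X1' X2 X2' K where w: "keys S = {}" "K \<inter> F = {}" "finite K"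
     "fpath K S X1" "fwd X1 (PAct u1 (Vis l) k) X1'" "fpath K S X2" "fwd X2 (PAct u1' (Vis l') k') X2'"
      by (rule wit_elim)
    have "finite (F \<union> K)" using F w(3) by simp
    with S3.IH(2) have h2: "wit (F \<union> K) (PAct u2 (Vis (coact l)) k) (PAct u2' (Vis (coact l')) k')" by blast
    then obtain T Y1 Y1' Y2 Y2' K2 where v: "keys T = {}" "K2 \<inter> (F \<union> K) = {}" "finite K2"
     "fpath K2 T Y1" "fwd Y1 (PAct u2 (Vis (coact l)) k) Y1'" "fpath K2 T Y2"
     "fwd Y2 (PAct u2' (Vis (coact l')) k') Y2'"
      by (rule wit_elim)
    have kx1: "keys X1 \<subseteq> K" "keys X2 \<subseteq> K" using fpath_keys w(1,4,6) by fastforce+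
    have sub: "K \<subseteq> K \<union> K2" "K2 \<subseteq> K \<union> K2" by auto
    have d1: "K2 \<inter> keys X1 = {}" "K2 \<inter> keys X2 = {}" using v(2) kx1 by auto
    have e1: "fpath K (Par S T) (Par X1 T)" by (rule fpath_ParL[OF w(4)]) (simp add: v(1))
    have e2: "fpath K2 (Par X1 T) (Par X1 Y1)" by (rule fpath_ParR[OF v(4) d1(1)])
    have p1: "fpath (K \<union> K2) (Par S T) (Par X1 Y1)"
      by (rule fpath_trans[OF fpath_mono[OF e2 sub(2)] fpath_mono[OF e1 sub(1)]])
    have e3: "fpath K (Par S T) (Par X2 T)" by (rule fpath_ParL[OF w(6)]) (simp add: v(1))
    have e4: "fpath K2 (Par X2 T) (Par X2 Y2)" by (rule fpath_ParR[OF v(6) d1(2)])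
    have p2: "fpath (K \<union> K2) (Par S T) (Par X2 Y2)"
      by (rule fpath_trans[OF fpath_mono[OF e4 sub(2)] fpath_mono[OF e3 sub(1)]])
    have kk: "(K \<union> K2) \<inter> F = {}" using w(2) v(2) by auto
    show "wit F (PSyn [] u1 l u2 k) (PSyn [] u1' l' u2' k')"
      by (rule wit_intro[OF _ kk _ p1 fwd.syn[OF w(5) v(5)] p2 fwd.syn[OF w(7) v(7)]])
         (simp_all add: w(1) v(1,3) w(3))
  qed
qed


lemma fpath_path: "fpath K X Y \<Longrightarrow> path X Y"
  unfolding path_def
proof (induction rule: fpath.induct)
  case (step X Y th Z)
  have "(\<lambda>A B. \<exists>th. ptrans A th B) Y Z" using step(2) by (auto simp add: ptrans_def)
  from rtranclp.rtrancl_into_rtrancl[OF step(4) this] show ?case .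
qed simp

lemma fpath_rpath: "fpath K X Y \<Longrightarrow> path Y X"
  unfolding path_def
proof (induction rule: fpath.induct)
  case (step X Y th Z)
  have "(\<lambda>A B. \<exists>th. ptrans A th B) Z Y" using step(2) by (auto simp add: ptrans_def)
  from converse_rtranclp_into_rtranclp[OF this step(4)] show ?case .
qed simp

lemma path_trans: "path X Y \<Longrightarrow> path Y Z \<Longrightarrow> path X Z"
  unfolding path_def by (rule rtranclp_trans)

lemma path_step: "ptrans X th Y \<Longrightarrow> path X Y"
  unfolding path_def by blast

theorem proposition4p4:
  fixes th1 th2 :: "'n pkl"
  shows "(\<forall>X1 X1' X2 X2'.
            reachable X1 \<and> reachable X2 \<and> ptrans X1 th1 X1' \<and> ptrans X2 th2 X2' \<and>
            connected X1 X1' X2 X2' \<longrightarrow> conn th1 th2)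
       \<and> (conn th1 th2 \<longrightarrow>
            (\<exists>X1 X1' X2 X2'. reachable X1 \<and> reachable X2 \<and>
               ptrans X1 th1 X1' \<and> ptrans X2 th2 X2' \<and> connected X1 X1' X2 X2'))"
proof (intro conjI allI impI)
  fix X1 X1' X2 X2'
  assume H: "reachable X1 \<and> reachable X2 \<and> ptrans X1 th1 X1' \<and> ptrans X2 th2 X2' \<and>
            connected X1 X1' X2 X2'"
  have s1: "skel X1 = skel X1'" "skel X2 = skel X2'" using H ptrans_skel by blast+
  have "skel X1 = skel X2"
    using H s1 path_skel unfolding connected_def by metis
  moreover have "can X1 th1" "can X2 th2" using H unfolding can_def by blast+
  ultimately show "conn th1 th2" using main1 by blast
next
  assume "conn th1 th2"
  then have "wit {} th1 th2" using wit_conn by blast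
  then obtain S X1 X1' X2 X2' K where w: "keys S = {}" "K \<inter> {} = {}" "finite K"
     "fpath K S X1" "fwd X1 th1 X1'" "fpath K S X2" "fwd X2 th2 X2'"
    by (rule wit_elim)
  have r1: "reachable X1" unfolding reachable_def standard_def using w(1) fpath_path[OF w(4)] by blast
  have r2: "reachable X2" unfolding reachable_def standard_def using w(1) fpath_path[OF w(6)] by blast
  have t1: "ptrans X1 th1 X1'" "ptrans X2 th2 X2'" using w(5,7) by (simp_all add: ptrans_def)
  have "path X1 X2'"
    using path_trans[OF fpath_rpath[OF w(4)] path_trans[OF fpath_path[OF w(6)] path_step[OF t1(2)]]] .
  then have "connected X1 X1' X2 X2'" unfolding connected_def by blast
  with r1 r2 t1 show "\<exists>X1 X1' X2 X2'. reachable X1 \<and> reachable X2 \<and>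
               ptrans X1 th1 X1' \<and> ptrans X2 th2 X2' \<and> connected X1 X1' X2 X2'" by blast
qed

end
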